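(* Let $T$ be a first-order theory and $p(\bar x)$ a type over $T$. For all sentences $\varphi,\sigma$: $(\varphi\to\sigma)\in[T]^p_\infty$ if and only if $\sigma\in[T+\varphi]^p_\infty$.
   Context: $p(\bar x)$ is a set of formulas with free variables among $\bar x$, consistent with $T$. For a theory $S$, $\mathrm{Th}(S)$ is its set of first-order consequences; $(S)^p=\{\neg\exists\bar x\varphi(\bar x): S\models\forall\bar x(\varphi(\bar x)\to\psi(\bar x))\text{ for all }\psi\in p\}$; $[S]^p=\mathrm{Th}(S+(S)^p)$. Recursively: $[S]^p_0=\mathrm{Th}(S)$, $[S]^p_{\alpha+1}=[[S]^p_\alpha]^p$, $[S]^p_\lambda=\bigcup_{\alpha<\lambda}[S]^p_\alpha$ for limit $\lambda$, and $[S]^p_\infty=\bigcup_{\alpha\in\mathrm{Ord}}[S]^p_\alpha$. *)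

theory Defs
  imports Main
begin

text \<open>Terms over function symbols 'f (used at any arity) with variables indexed by nat.\<close>
datatype 'f trm = Var nat | Fn 'f "'f trm list"

datatype ('f, 'r) fm =
    Bot
  | Eq "'f trm" "'f trm"
  | Rel 'r "'f trm list"
  | Imp "('f, 'r) fm" "('f, 'r) fm"
  | Ex nat "('f, 'r) fm"

definition Neg :: "('f, 'r) fm \<Rightarrow> ('f, 'r) fm" where
  "Neg \<phi> = Imp \<phi> Bot"

definition Exs :: "nat list \<Rightarrow> ('f, 'r) fm \<Rightarrow> ('f, 'r) fm" where
  "Exs xs \<phi> = foldr Ex xs \<phi>"

fun tvars :: "'f trm \<Rightarrow> nat set" where
  "tvars (Var n) = {n}"
| "tvars (Fn f ts) = (\<Union>t\<in>set ts. tvars t)"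

fun frees :: "('f, 'r) fm \<Rightarrow> nat set" where
  "frees Bot = {}"
| "frees (Eq s t) = tvars s \<union> tvars t"
| "frees (Rel r ts) = (\<Union>t\<in>set ts. tvars t)"
| "frees (Imp \<phi> \<psi>) = frees \<phi> \<union> frees \<psi>"
| "frees (Ex x \<phi>) = frees \<phi> - {x}"

definition sentence :: "('f, 'r) fm \<Rightarrow> bool" where
  "sentence \<phi> \<longleftrightarrow> frees \<phi> = {}"

record ('u, 'f, 'r) struct =
  dom :: "'u set"
  fn  :: "'f \<Rightarrow> 'u list \<Rightarrow> 'u"
  rl  :: "'r \<Rightarrow> 'u list \<Rightarrow> bool"

definition is_struct :: "('u, 'f, 'r) struct \<Rightarrow> bool" where
  "is_struct M \<longleftrightarrow> dom M \<noteq> {} \<and> (\<forall>f ds. set ds \<subseteq> dom M \<longrightarrow> fn M f ds \<in> dom M)"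

fun eval :: "('u, 'f, 'r) struct \<Rightarrow> (nat \<Rightarrow> 'u) \<Rightarrow> 'f trm \<Rightarrow> 'u" where
  "eval M a (Var n) = a n"
| "eval M a (Fn f ts) = fn M f (map (eval M a) ts)"

fun sat :: "('u, 'f, 'r) struct \<Rightarrow> (nat \<Rightarrow> 'u) \<Rightarrow> ('f, 'r) fm \<Rightarrow> bool" where
  "sat M a Bot = False"
| "sat M a (Eq s t) = (eval M a s = eval M a t)"
| "sat M a (Rel r ts) = rl M r (map (eval M a) ts)"
| "sat M a (Imp \<phi> \<psi>) = (sat M a \<phi> \<longrightarrow> sat M a \<psi>)"
| "sat M a (Ex x \<phi>) = (\<exists>d\<in>dom M. sat M (a(x := d)) \<phi>)"

text \<open>Truth of a formula in M: satisfied under every assignment into the domain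
  (i.e. truth of its universal closure).\<close>
definition holds :: "('u, 'f, 'r) struct \<Rightarrow> ('f, 'r) fm \<Rightarrow> bool" where
  "holds M \<phi> \<longleftrightarrow> (\<forall>a. range a \<subseteq> dom M \<longrightarrow> sat M a \<phi>)"

definition is_model :: "('u, 'f, 'r) struct \<Rightarrow> ('f, 'r) fm set \<Rightarrow> bool" where
  "is_model M S \<longleftrightarrow> is_struct M \<and> (\<forall>\<phi>\<in>S. holds M \<phi>)"

text \<open>Models range over all structures whose domain is a
  nonempty subset of a fixed set of cardinality |L| + aleph_0 (we use the type of
  formulas itself); by Loewenheim-Skolem this is first-order consequence.\<close>
definition entails :: "('f, 'r) fm set \<Rightarrow> ('f, 'r) fm \<Rightarrow> bool" where
  "entails S \<phi> \<longleftrightarrow>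
     (\<forall>M :: (('f, 'r) fm, 'f, 'r) struct. is_model M S \<longrightarrow> holds M \<phi>)"

definition Th :: "('f, 'r) fm set \<Rightarrow> ('f, 'r) fm set" where
  "Th S = {\<phi>. sentence \<phi> \<and> entails S \<phi>}"

definition is_type :: "('f, 'r) fm set \<Rightarrow> nat list \<Rightarrow> ('f, 'r) fm set \<Rightarrow> bool" where
  "is_type T xs p \<longleftrightarrow> distinct xs \<and> (\<forall>\<psi>\<in>p. frees \<psi> \<subseteq> set xs) \<and>
     (\<exists>M :: (('f, 'r) fm, 'f, 'r) struct. \<exists>a. is_model M T \<and> range a \<subseteq> dom M \<and>
        (\<forall>\<psi>\<in>p. sat M a \<psi>))"

definition omitp :: "('f, 'r) fm set \<Rightarrow> nat list \<Rightarrow> ('f, 'r) fm set \<Rightarrow> ('f, 'r) fm set" where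
  "omitp p xs S = {Neg (Exs xs \<phi>) | \<phi>. frees \<phi> \<subseteq> set xs \<and>
                     (\<forall>\<psi>\<in>p. entails S (Imp \<phi> \<psi>))}"

definition bracket :: "('f, 'r) fm set \<Rightarrow> nat list \<Rightarrow> ('f, 'r) fm set \<Rightarrow> ('f, 'r) fm set" where
  "bracket p xs S = Th (S \<union> omitp p xs S)"

text \<open>The stages [S]^p_alpha (alpha an ordinal) are exactly the sets generated from
  Th(S) by the successor step and by unions of nonempty sets of stages (limits).\<close>
inductive stage :: "('f, 'r) fm set \<Rightarrow> nat list \<Rightarrow> ('f, 'r) fm set \<Rightarrow> ('f, 'r) fm set \<Rightarrow> bool"
  for p xs S where
  base: "stage p xs S (Th S)"
| succ: "stage p xs S X \<Longrightarrow> stage p xs S (bracket p xs X)"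
| lim:  "A \<noteq> {} \<Longrightarrow> (\<And>X. X \<in> A \<Longrightarrow> stage p xs S X) \<Longrightarrow> stage p xs S (\<Union>A)"

definition bracket_inf :: "('f, 'r) fm set \<Rightarrow> nat list \<Rightarrow> ('f, 'r) fm set \<Rightarrow> ('f, 'r) fm set" where
  "bracket_inf p xs S = \<Union>{X. stage p xs S X}"

end

theory Submission
  imports Defs
begin

definition And :: "('f, 'r) fm \<Rightarrow> ('f, 'r) fm \<Rightarrow> ('f, 'r) fm" where
  "And a b = Neg (Imp a (Neg b))"

lemma sat_And[simp]: "sat M a (And x y) = (sat M a x \<and> sat M a y)"
  by (auto simp: And_def Neg_def)

lemma frees_And[simp]: "frees (And x y) = frees x \<union> frees y"
  by (auto simp: And_def Neg_def)

lemma Exs_Nil[simp]: "Exs [] c = c" by (simp add: Exs_def)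
lemma Exs_Cons[simp]: "Exs (x#xs) c = Ex x (Exs xs c)" by (simp add: Exs_def)

lemma frees_Exs[simp]: "frees (Exs xs c) = frees c - set xs"
  by (induction xs) auto

lemma eval_cong: "(\<forall>n\<in>tvars t. a n = b n) \<Longrightarrow> eval M a t = eval M b t"
proof (induction t)
  case (Fn f ts)
  then have "map (eval M a) ts = map (eval M b) ts" by auto
  then show ?case by (simp only: eval.simps)
qed simp

lemma sat_cong: "(\<forall>n\<in>frees f. a n = b n) \<Longrightarrow> sat M a f = sat M b f"
proof (induction f arbitrary: a b)
  case (Eq s t) then show ?case using eval_cong[of s a b M] eval_cong[of t a b M] by auto
next
  case (Rel r ts)
  have "map (eval M a) ts = map (eval M b) ts"
    using Rel by (auto intro: eval_cong)
  then show ?case by (simp only: sat.simps)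
next
  case (Imp f g)
  have "sat M a f = sat M b f" "sat M a g = sat M b g" using Imp.IH Imp.prems by auto
  then show ?case by simp
next
  case (Ex x f)
  have "\<And>d. sat M (a(x:=d)) f = sat M (b(x:=d)) f"
    using Ex.IH Ex.prems by auto
  then show ?case by simp
qed simp

lemma sentence_sat: "sentence f \<Longrightarrow> sat M a f = sat M b f"
  by (rule sat_cong) (simp add: sentence_def)

lemma sentence_holds: "sentence f \<Longrightarrow> range a \<subseteq> dom M \<Longrightarrow> sat M a f \<Longrightarrow> holds M f"
  unfolding holds_def using sentence_sat by blast

lemma sat_Exs_And:
  "sentence f \<Longrightarrow> sat M a f \<Longrightarrow> sat M a (Exs xs c) \<Longrightarrow> sat M a (Exs xs (And f c))"
proof (induction xs arbitrary: a)
  case (Cons x xs)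
  then obtain d where "d \<in> dom M" "sat M (a(x:=d)) (Exs xs c)" by auto
  moreover have "sat M (a(x:=d)) f" using Cons.prems sentence_sat by blast
  ultimately show ?case using Cons.IH[OF Cons.prems(1)] by auto
qed simp

lemma model_Th: "is_model (M :: (('f,'r) fm,'f,'r) struct) S \<Longrightarrow> is_model M (Th S)"
  unfolding is_model_def Th_def entails_def by auto

lemma Th_sub: "(\<And>M::(('f,'r) fm,'f,'r) struct. is_model M B \<Longrightarrow> is_model M A) \<Longrightarrow> Th A \<subseteq> Th B"
  by (auto simp: Th_def entails_def)

lemma model_mono: "A \<subseteq> B \<Longrightarrow> is_model M B \<Longrightarrow> is_model M A"
  by (auto simp: is_model_def)

lemma sub_Th: "\<forall>c\<in>S. sentence c \<Longrightarrow> S \<subseteq> Th S"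
  by (auto simp: Th_def entails_def is_model_def)

lemma mem_Th: "c \<in> S \<Longrightarrow> sentence c \<Longrightarrow> c \<in> Th S"
  by (auto simp: Th_def entails_def is_model_def)

lemma Th_sent: "c \<in> Th S \<Longrightarrow> sentence c"
  by (simp add: Th_def)

lemma stage_sent: "stage p xs S X \<Longrightarrow> \<forall>c\<in>X. sentence c"
  by (induction rule: stage.induct) (auto simp: bracket_def Th_def)

lemma Th_bracket: "Th Z \<subseteq> bracket p xs Z"
  unfolding bracket_def by (rule Th_sub) (auto intro: model_mono)

lemma partA:
  fixes T :: "('f,'r) fm set"
  assumes T: "\<forall>c\<in>T. sentence c" and phi: "sentence \<phi>"
  shows "stage p xs (insert \<phi> T) Y \<Longrightarrow> \<exists>X. stage p xs T X \<and> Y \<subseteq> Th (insert \<phi> X)"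
proof (induction rule: stage.induct)
  case base
  have "Th (insert \<phi> T) \<subseteq> Th (insert \<phi> (Th T))"
  proof (rule Th_sub)
    fix M :: "(('f,'r) fm,'f,'r) struct"
    assume "is_model M (insert \<phi> (Th T))"
    then show "is_model M (insert \<phi> T)" using sub_Th[OF T] by (auto intro: model_mono)
  qed
  then show ?case using stage.base by blast
next
  case (succ Y)
  then obtain X where X: "stage p xs T X" and YX: "Y \<subseteq> Th (insert \<phi> X)" by blast
  have Xs: "\<forall>c\<in>X. sentence c" using stage_sent[OF X] .
  have "bracket p xs Y \<subseteq> Th (insert \<phi> (bracket p xs X))"
    unfolding bracket_def
  proof (rule Th_sub)
    fix M :: "(('f,'r) fm,'f,'r) struct"
    assume M: "is_model M (insert \<phi> (Th (X \<union> omitp p xs X)))"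
    have MX: "is_model M (Th (X \<union> omitp p xs X))" using M by (auto intro: model_mono)
    have "Th X \<subseteq> Th (X \<union> omitp p xs X)" by (rule Th_sub) (auto intro: model_mono)
    then have "X \<subseteq> Th (X \<union> omitp p xs X)" using sub_Th[OF Xs] by blast
    then have "is_model M (insert \<phi> X)" using M by (auto intro: model_mono)
    then have MY: "is_model M Y" using model_Th YX by (auto intro: model_mono)
    have "holds M c" if c: "c \<in> omitp p xs Y" for c
    proof -
      obtain \<chi> where c: "c = Neg (Exs xs \<chi>)" and fr: "frees \<chi> \<subseteq> set xs"
        and ent: "\<forall>\<psi>\<in>p. entails Y (Imp \<chi> \<psi>)"
        using c unfolding omitp_def by blast
      have "\<forall>\<psi>\<in>p. entails X (Imp (And \<phi> \<chi>) \<psi>)"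
      proof (intro ballI)
        fix \<psi> assume "\<psi> \<in> p"
        then have e: "entails Y (Imp \<chi> \<psi>)" using ent by blast
        show "entails X (Imp (And \<phi> \<chi>) \<psi>)"
          unfolding entails_def
        proof (intro allI impI)
          fix N :: "(('f,'r) fm,'f,'r) struct"
          assume N: "is_model N X"
          show "holds N (Imp (And \<phi> \<chi>) \<psi>)"
            unfolding holds_def
          proof (intro allI impI)
            fix a :: "nat \<Rightarrow> _" assume a: "range a \<subseteq> dom N"
            show "sat N a (Imp (And \<phi> \<chi>) \<psi>)"
            proof (simp, intro impI, elim conjE)
              assume "sat N a \<phi>" "sat N a \<chi>"
              then have "holds N \<phi>" using sentence_holds[OF phi a] by blast
              then have "is_model N (insert \<phi> X)" using N by (auto simp: is_model_def)
              then have "is_model N Y" using model_Th YX by (auto intro: model_mono)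
              then have "holds N (Imp \<chi> \<psi>)" using e unfolding entails_def by blast
              then show "sat N a \<psi>" using a \<open>sat N a \<chi>\<close> unfolding holds_def by auto
            qed
          qed
        qed
      qed
      moreover have "frees (And \<phi> \<chi>) \<subseteq> set xs" using fr phi by (simp add: sentence_def)
      ultimately have "Neg (Exs xs (And \<phi> \<chi>)) \<in> omitp p xs X" unfolding omitp_def by blast
      moreover have "sentence (Neg (Exs xs (And \<phi> \<chi>)))"
        using fr phi by (auto simp: sentence_def Neg_def)
      ultimately have "Neg (Exs xs (And \<phi> \<chi>)) \<in> Th (X \<union> omitp p xs X)"
        by (auto intro: mem_Th)
      then have h1: "holds M (Neg (Exs xs (And \<phi> \<chi>)))" using MX by (auto simp: is_model_def)
      have h2: "holds M \<phi>" using M by (auto simp: is_model_def)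
      show "holds M c" unfolding c holds_def
      proof (intro allI impI)
        fix a :: "nat \<Rightarrow> _" assume a: "range a \<subseteq> dom M"
        show "sat M a (Neg (Exs xs \<chi>))"
          using h1 h2 a sat_Exs_And[OF phi, of M a xs \<chi>] unfolding holds_def Neg_def by auto
      qed
    qed
    then show "is_model M (Y \<union> omitp p xs Y)" using MY by (auto simp: is_model_def)
  qed
  then show ?case using stage.succ[OF X] by blast
next
  case (lim A)
  then obtain f where f: "\<And>Y. Y \<in> A \<Longrightarrow> stage p xs T (f Y) \<and> Y \<subseteq> Th (insert \<phi> (f Y))"
    by metis
  have st: "stage p xs T (\<Union>(f ` A))" using f lim.hyps(1) by (auto intro!: stage.lim)
  have "Y \<subseteq> Th (insert \<phi> (\<Union>(f ` A)))" if "Y \<in> A" for Y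
  proof -
    have "Th (insert \<phi> (f Y)) \<subseteq> Th (insert \<phi> (\<Union>(f ` A)))"
      by (rule Th_sub) (use that in \<open>auto intro: model_mono\<close>)
    then show ?thesis using f that by blast
  qed
  then show ?case using st by blast
qed

lemma partB:
  fixes T :: "('f,'r) fm set"
  assumes T: "\<forall>c\<in>T. sentence c" and phi: "sentence \<phi>"
  shows "stage p xs T X \<Longrightarrow> \<exists>Y. stage p xs (insert \<phi> T) Y \<and> Th (insert \<phi> X) \<subseteq> Y"
proof (induction rule: stage.induct)
  case base
  have "Th (insert \<phi> (Th T)) \<subseteq> Th (insert \<phi> T)"
  proof (rule Th_sub)
    fix M :: "(('f,'r) fm,'f,'r) struct"
    assume "is_model M (insert \<phi> T)"
    then show "is_model M (insert \<phi> (Th T))"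
      using model_Th[of M T] by (auto simp: is_model_def)
  qed
  then show ?case using stage.base by blast
next
  case (succ X)
  then obtain Y where Y: "stage p xs (insert \<phi> T) Y" and XY: "Th (insert \<phi> X) \<subseteq> Y" by blast
  have Xs: "\<forall>c\<in>X. sentence c" using stage_sent[OF succ.hyps] .
  have phiY: "\<phi> \<in> Y" using XY sub_Th[of "insert \<phi> X"] Xs phi by auto
  have XsubY: "X \<subseteq> Y" using XY sub_Th[of "insert \<phi> X"] Xs phi by auto
  have om: "omitp p xs X \<subseteq> omitp p xs Y"
    unfolding omitp_def entails_def using XsubY by (blast intro: model_mono)
  have "Th (insert \<phi> (bracket p xs X)) \<subseteq> bracket p xs Y"
    unfolding bracket_def
  proof (rule Th_sub)
    fix M :: "(('f,'r) fm,'f,'r) struct"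
    assume M: "is_model M (Y \<union> omitp p xs Y)"
    then have "is_model M (X \<union> omitp p xs X)"
      by (rule model_mono[rotated]) (use XsubY om in blast)
    then have "is_model M (Th (X \<union> omitp p xs X))" by (rule model_Th)
    then show "is_model M (insert \<phi> (Th (X \<union> omitp p xs X)))"
      using M phiY by (auto simp: is_model_def)
  qed
  then show ?case using stage.succ[OF Y] by blast
next
  case (lim A)
  then obtain g where g: "\<And>X. X \<in> A \<Longrightarrow> stage p xs (insert \<phi> T) (g X) \<and> Th (insert \<phi> X) \<subseteq> g X"
    by metis
  have st: "stage p xs (insert \<phi> T) (bracket p xs (\<Union>(g ` A)))"
    using g lim.hyps(1) by (auto intro!: stage.lim stage.succ)
  obtain X0 where X0: "X0 \<in> A" using lim.hyps(1) by blast
  have sub: "insert \<phi> (\<Union>A) \<subseteq> \<Union>(g ` A)"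
  proof -
    have "\<phi> \<in> g X0" using g[OF X0] sub_Th[of "insert \<phi> X0"] stage_sent[of p xs T X0] g X0 lim.hyps(2) phi
      by auto
    moreover have "X \<subseteq> g X" if "X \<in> A" for X
      using g[OF that] sub_Th[of "insert \<phi> X"] stage_sent[of p xs T X] lim.hyps(2)[OF that] phi by auto
    ultimately show ?thesis using X0 by blast
  qed
  have "Th (insert \<phi> (\<Union>A)) \<subseteq> Th (\<Union>(g ` A))"
    by (rule Th_sub) (use sub in \<open>auto intro: model_mono\<close>)
  then show ?case using st Th_bracket by blast
qed

theorem mainTheorem15:
  fixes T p :: "('f, 'r) fm set" and xs :: "nat list" and \<phi> \<sigma> :: "('f, 'r) fm"
  assumes "\<forall>\<chi>\<in>T. sentence \<chi>"
    and "is_type T xs p"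
    and "sentence \<phi>" and "sentence \<sigma>"
  shows "Imp \<phi> \<sigma> \<in> bracket_inf p xs T \<longleftrightarrow> \<sigma> \<in> bracket_inf p xs (insert \<phi> T)"
proof
  assume "Imp \<phi> \<sigma> \<in> bracket_inf p xs T"
  then obtain X where X: "stage p xs T X" and i: "Imp \<phi> \<sigma> \<in> X"
    unfolding bracket_inf_def by blast
  obtain Y where Y: "stage p xs (insert \<phi> T) Y" and XY: "Th (insert \<phi> X) \<subseteq> Y"
    using partB[OF assms(1,3) X] by blast
  have "\<sigma> \<in> Th (insert \<phi> X)"
    unfolding Th_def entails_def using assms(4) i
    by (auto simp: is_model_def holds_def)
  then show "\<sigma> \<in> bracket_inf p xs (insert \<phi> T)"
    unfolding bracket_inf_def using Y XY by blast
next
  assume "\<sigma> \<in> bracket_inf p xs (insert \<phi> T)"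
  then obtain Y where Y: "stage p xs (insert \<phi> T) Y" and s: "\<sigma> \<in> Y"
    unfolding bracket_inf_def by blast
  obtain X where X: "stage p xs T X" and YX: "Y \<subseteq> Th (insert \<phi> X)"
    using partA[OF assms(1,3) Y] by blast
  have ent: "entails (insert \<phi> X) \<sigma>" using s YX by (auto simp: Th_def)
  have "Imp \<phi> \<sigma> \<in> bracket p xs X"
    unfolding bracket_def Th_def
  proof (intro CollectI conjI)
    show "sentence (Imp \<phi> \<sigma>)" using assms(3,4) by (simp add: sentence_def)
    show "entails (X \<union> omitp p xs X) (Imp \<phi> \<sigma>)"
      unfolding entails_def
    proof (intro allI impI)
      fix M :: "(('f,'r) fm,'f,'r) struct"
      assume M: "is_model M (X \<union> omitp p xs X)"
      show "holds M (Imp \<phi> \<sigma>)"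
        unfolding holds_def
      proof (intro allI impI)
        fix a :: "nat \<Rightarrow> _" assume a: "range a \<subseteq> dom M"
        show "sat M a (Imp \<phi> \<sigma>)"
        proof (simp, intro impI)
          assume "sat M a \<phi>"
          then have "holds M \<phi>" using sentence_holds[OF assms(3) a] by blast
          then have "is_model M (insert \<phi> X)" using M by (auto simp: is_model_def)
          then have "holds M \<sigma>" using ent unfolding entails_def by blast
          then show "sat M a \<sigma>" using a unfolding holds_def by blast
        qed
      qed
    qed
  qed
  then show "Imp \<phi> \<sigma> \<in> bracket_inf p xs T"
    unfolding bracket_inf_def using stage.succ[OF X] by blast
qed

end
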